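(* Let $G\ge 1$, let $\omega_1,\dots,\omega_G>0$ be weights with $\sum_{g=1}^G\omega_g=1$, let $P_1,\dots,P_G\in\mathbb{R}$, let $\beta>0$, let $\bar H\in[0,1]$ and set $C=2\bigl(\bar H-\tfrac12\bigr)\in[-1,1]$. Consider the equation for the unknown $\phi\in\mathbb{R}$ $$\sum_{g=1}^G \omega_g\,\frac{\tanh(\beta P_g)+\tanh(\beta\phi)}{1+\tanh(\beta P_g)\tanh(\beta\phi)}=C,$$ which is equivalent to $\sum_{g=1}^G \omega_g\,\tfrac12\bigl(1+\tanh(\beta(P_g+\phi))\bigr)=\bar H$. Let $\gamma\in\mathbb{R}$, define $A_g=\tanh(\beta P_g+\gamma)$ for $g=1,\dots,G$, and for $D\in[-1,1]$ define $$f(D)=\sum_{g=1}^G\omega_g\,\frac{A_g+D}{1+A_gD}-C,$$ so that with $D=\tanh(\beta\phi-\gamma)$ the equation above reads $f(D)=0$. Suppose that either (i) $\gamma<\min_g(-\beta P_g)=-\max_g(\beta P_g)$, or (ii) $\gamma>\max_g(-\beta P_g)=-\min_g(\beta P_g)$. Consider the Newton–Raphson iteration $D_{k+1}=D_k-f(D_k)/f'(D_k)$, with initial value $D_0=1$ in case (i) and $D_0=-1$ in case (ii). Then the sequence $(D_k)$ converges to the unique solution $D^\star\in[-1,1]$ of $f(D)=0$ (corresponding to the unique solution of the equation above); all terms of the sequence lie in $[-1,1]$; the sequence is monotonically decreasing in case (i) and monotonically increasing in case (ii); and the convergence is quadratic.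
   Context: This arises from enforcing, via a quadrature rule with nodes $\mathbf{x}_g$ and weights $\omega_g$, that the cell average of the THINC function $\tfrac12(1+\tanh(\beta(\mathcal{P}(\mathbf{x})+\phi)))$ equals a given volume fraction $\bar H$; here $P_g=\mathcal{P}(\mathbf{x}_g)$ are the values of a given polynomial at the quadrature nodes, and $\phi$ is the unknown shift. After solving for $D$, one recovers $\phi=\frac1\beta(\tanh^{-1}(D)+\gamma)$. *)

theory Defs
  imports "HOL-Analysis.Analysis"
begin

primrec newton_seq :: "(real \<Rightarrow> real) \<Rightarrow> real \<Rightarrow> nat \<Rightarrow> real" where
  "newton_seq f d0 0 = d0"
| "newton_seq f d0 (Suc k) = newton_seq f d0 k - f (newton_seq f d0 k) / deriv f (newton_seq f d0 k)"

definition thinc_f :: "nat \<Rightarrow> (nat \<Rightarrow> real) \<Rightarrow> (nat \<Rightarrow> real) \<Rightarrow> real \<Rightarrow> real \<Rightarrow> real \<Rightarrow> real \<Rightarrow> real" where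
  "thinc_f G \<omega> P \<beta> \<gamma> Hbar D =
     (let C = 2 * (Hbar - 1/2); A = (\<lambda>g. tanh (\<beta> * P g + \<gamma>))
      in (\<Sum>g=1..G. \<omega> g * ((A g + D) / (1 + A g * D))) - C)"

end

theory Submission imports Defs begin

definition Fn :: "nat set \<Rightarrow> (nat\<Rightarrow>real) \<Rightarrow> (nat\<Rightarrow>real) \<Rightarrow> real \<Rightarrow> real \<Rightarrow> real" where
  "Fn I w A C D = (\<Sum>g\<in>I. w g * ((A g + D) / (1 + A g * D))) - C"
definition Fd :: "nat set \<Rightarrow> (nat\<Rightarrow>real) \<Rightarrow> (nat\<Rightarrow>real) \<Rightarrow> real \<Rightarrow> real" where
  "Fd I w A D = (\<Sum>g\<in>I. w g * ((1 - (A g)\<^sup>2) / (1 + A g * D)\<^sup>2))"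
definition Sf :: "nat set \<Rightarrow> (nat\<Rightarrow>real) \<Rightarrow> (nat\<Rightarrow>real) \<Rightarrow> real \<Rightarrow> real \<Rightarrow> real" where
  "Sf I w A D E = (\<Sum>g\<in>I. w g * ((1 - (A g)\<^sup>2) / ((1 + A g * D) * (1 + A g * E))))"
definition Qf :: "nat set \<Rightarrow> (nat\<Rightarrow>real) \<Rightarrow> (nat\<Rightarrow>real) \<Rightarrow> real \<Rightarrow> real \<Rightarrow> real" where
  "Qf I w A D E = (\<Sum>g\<in>I. w g * (A g * (1 - (A g)\<^sup>2) / ((1 + A g * D)\<^sup>2 * (1 + A g * E))))"
definition Wt :: "nat set \<Rightarrow> (nat\<Rightarrow>real) \<Rightarrow> (nat\<Rightarrow>real) \<Rightarrow> real" where
  "Wt I w A = (\<Sum>g\<in>I. w g * (1 - (A g)\<^sup>2))"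

lemma ubound:
  fixes A D a :: real
  assumes "\<bar>A\<bar> \<le> a" "\<bar>D\<bar> \<le> 1"
  shows "1 - a \<le> 1 + A * D" "1 + A * D \<le> 1 + a"
proof -
  have "\<bar>A * D\<bar> \<le> \<bar>A\<bar>" using assms by (simp add: abs_mult mult_left_le)
  then show "1 - a \<le> 1 + A * D" "1 + A * D \<le> 1 + a" using assms by auto
qed

lemma newton_term:
  fixes u v x D E w :: real
  assumes "u \<noteq> 0" "v \<noteq> 0" "v - u = x * (E - D)"
  shows "w * ((1 - x\<^sup>2) / u\<^sup>2) * (D - E) - (D - E) * (w * ((1 - x\<^sup>2) / (u * v)))
       = - ((D - E)\<^sup>2 * (w * (x * (1 - x\<^sup>2) / (u\<^sup>2 * v))))"
proof -
  have "w * ((1 - x\<^sup>2) / u\<^sup>2) * (D - E) - (D - E) * (w * ((1 - x\<^sup>2) / (u * v)))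
       = w * (1 - x\<^sup>2) * (D - E) * (v - u) / (u\<^sup>2 * v)"
    using assms(1,2) by (simp add: field_simps power2_eq_square)
  also have "\<dots> = - ((D - E)\<^sup>2 * (w * (x * (1 - x\<^sup>2) / (u\<^sup>2 * v))))"
    unfolding assms(3) using assms(1,2) by (simp add: field_simps power2_eq_square)
  finally show ?thesis .
qed

context
  fixes I :: "nat set" and w A :: "nat \<Rightarrow> real" and C a :: real
  assumes fin: "finite I" and ne: "I \<noteq> {}" and wpos: "\<And>g. g \<in> I \<Longrightarrow> w g > 0"
    and wsum: "sum w I = 1" and Ab: "\<And>g. g \<in> I \<Longrightarrow> \<bar>A g\<bar> \<le> a" and a1: "a < 1"
begin

lemma a0: "0 \<le> a"
  using ne Ab by fastforce

lemma u_lo: "g \<in> I \<Longrightarrow> \<bar>D\<bar> \<le> 1 \<Longrightarrow> 1 - a \<le> 1 + A g * D"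
  using ubound(1)[OF Ab] by blast
lemma u_hi: "g \<in> I \<Longrightarrow> \<bar>D\<bar> \<le> 1 \<Longrightarrow> 1 + A g * D \<le> 1 + a"
  using ubound(2)[OF Ab] by blast
lemma u_pos: "g \<in> I \<Longrightarrow> \<bar>D\<bar> \<le> 1 \<Longrightarrow> 0 < 1 + A g * D"
  using u_lo[of g D] a1 by linarith

lemma A_sq: "g \<in> I \<Longrightarrow> 0 < 1 - (A g)\<^sup>2"
proof -
  assume g: "g \<in> I"
  have "\<bar>A g\<bar> < 1" using Ab[OF g] a1 by linarith
  then have "(A g)\<^sup>2 < 1" by (simp add: abs_square_less_1)
  then show ?thesis by simp
qed

lemma W_pos: "Wt I w A > 0"
  unfolding Wt_def using fin ne
  by (intro sum_pos) (auto intro!: mult_pos_pos wpos A_sq)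

lemma Fd_lo: assumes "\<bar>D\<bar> \<le> 1" shows "Wt I w A / (1 + a)\<^sup>2 \<le> Fd I w A D"
  unfolding Wt_def Fd_def sum_divide_distrib
proof (rule sum_mono)
  fix g assume g: "g \<in> I"
  have u: "0 < 1 + A g * D" "1 + A g * D \<le> 1 + a" using u_pos[OF g assms] u_hi[OF g assms] by auto
  have "(1 + A g * D)\<^sup>2 \<le> (1 + a)\<^sup>2" using u by (intro power_mono) auto
  then have X: "(1 - (A g)\<^sup>2) / (1 + a)\<^sup>2 \<le> (1 - (A g)\<^sup>2) / (1 + A g * D)\<^sup>2"
    using u A_sq[OF g] by (intro frac_le) auto
  then show "w g * (1 - (A g)\<^sup>2) / (1 + a)\<^sup>2 \<le> w g * ((1 - (A g)\<^sup>2) / (1 + A g * D)\<^sup>2)"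
    using mult_left_mono[OF X, of "w g"] wpos[OF g] by simp
qed

lemma Fd_hi: assumes "\<bar>D\<bar> \<le> 1" shows "Fd I w A D \<le> Wt I w A / (1 - a)\<^sup>2"
  unfolding Wt_def Fd_def sum_divide_distrib
proof (rule sum_mono)
  fix g assume g: "g \<in> I"
  have u: "0 < 1 - a" "1 - a \<le> 1 + A g * D" using u_lo[OF g assms] a1 by auto
  have "(1 - a)\<^sup>2 \<le> (1 + A g * D)\<^sup>2" using u by (intro power_mono) auto
  then have X: "(1 - (A g)\<^sup>2) / (1 + A g * D)\<^sup>2 \<le> (1 - (A g)\<^sup>2) / (1 - a)\<^sup>2"
    using u A_sq[OF g] by (intro frac_le) auto
  then show "w g * ((1 - (A g)\<^sup>2) / (1 + A g * D)\<^sup>2) \<le> w g * (1 - (A g)\<^sup>2) / (1 - a)\<^sup>2"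
    using mult_left_mono[OF X, of "w g"] wpos[OF g] by simp
qed

lemma Fd_pos: "\<bar>D\<bar> \<le> 1 \<Longrightarrow> Fd I w A D > 0"
  using Fd_lo[of D] W_pos a0 by (smt (verit) divide_pos_pos zero_less_power)

lemma Sf_lo: assumes "\<bar>D\<bar> \<le> 1" "\<bar>E\<bar> \<le> 1" shows "Wt I w A / (1 + a)\<^sup>2 \<le> Sf I w A D E"
  unfolding Wt_def Sf_def sum_divide_distrib
proof (rule sum_mono)
  fix g assume g: "g \<in> I"
  have u: "0 < 1 + A g * D" "1 + A g * D \<le> 1 + a" using u_pos[OF g assms(1)] u_hi[OF g assms(1)] by auto
  have v: "0 < 1 + A g * E" "1 + A g * E \<le> 1 + a" using u_pos[OF g assms(2)] u_hi[OF g assms(2)] by auto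
  have "(1 + A g * D) * (1 + A g * E) \<le> (1 + a)\<^sup>2" unfolding power2_eq_square
    using u v by (intro mult_mono) auto
  then have X: "(1 - (A g)\<^sup>2) / (1 + a)\<^sup>2 \<le> (1 - (A g)\<^sup>2) / ((1 + A g * D) * (1 + A g * E))"
    using u v A_sq[OF g] by (intro frac_le) auto
  then show "w g * (1 - (A g)\<^sup>2) / (1 + a)\<^sup>2 \<le> w g * ((1 - (A g)\<^sup>2) / ((1 + A g * D) * (1 + A g * E)))"
    using mult_left_mono[OF X, of "w g"] wpos[OF g] by simp
qed

lemma Qf_abs: assumes "\<bar>D\<bar> \<le> 1" "\<bar>E\<bar> \<le> 1" shows "\<bar>Qf I w A D E\<bar> \<le> Wt I w A / (1 - a)^3"
proof -
  have "\<bar>Qf I w A D E\<bar> \<le> (\<Sum>g\<in>I. \<bar>w g * (A g * (1 - (A g)\<^sup>2) / ((1 + A g * D)\<^sup>2 * (1 + A g * E)))\<bar>)"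
    unfolding Qf_def by (rule sum_abs)
  also have "\<dots> \<le> (\<Sum>g\<in>I. w g * (1 - (A g)\<^sup>2) / (1 - a)^3)"
  proof (rule sum_mono)
    fix g assume g: "g \<in> I"
    have u: "0 < 1 - a" "1 - a \<le> 1 + A g * D" using u_lo[OF g assms(1)] a1 by auto
    have v: "1 - a \<le> 1 + A g * E" using u_lo[OF g assms(2)] by auto
    have "(1 - a)^3 \<le> (1 + A g * D)\<^sup>2 * (1 + A g * E)"
    proof -
      have "(1 - a)\<^sup>2 \<le> (1 + A g * D)\<^sup>2" using u by (intro power_mono) auto
      then have "(1 - a)\<^sup>2 * (1 - a) \<le> (1 + A g * D)\<^sup>2 * (1 + A g * E)"
        using u v by (intro mult_mono) auto
      then show ?thesis by (simp add: power2_eq_square power3_eq_cube)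
    qed
    moreover have "\<bar>A g\<bar> \<le> 1" using Ab[OF g] a1 by linarith
    ultimately have X: "\<bar>A g\<bar> * (1 - (A g)\<^sup>2) / ((1 + A g * D)\<^sup>2 * (1 + A g * E)) \<le> (1 - (A g)\<^sup>2) / (1 - a)^3"
      using u A_sq[OF g] by (intro frac_le) (auto intro: mult_left_le_one_le)
    moreover have Y: "\<bar>w g * (A g * (1 - (A g)\<^sup>2) / ((1 + A g * D)\<^sup>2 * (1 + A g * E)))\<bar>
       = w g * (\<bar>A g\<bar> * (1 - (A g)\<^sup>2) / ((1 + A g * D)\<^sup>2 * (1 + A g * E)))"
      using wpos[OF g] A_sq[OF g] u_pos[OF g assms(1)] u_pos[OF g assms(2)]
      by (simp add: abs_mult)
    ultimately show "\<bar>w g * (A g * (1 - (A g)\<^sup>2) / ((1 + A g * D)\<^sup>2 * (1 + A g * E)))\<bar> \<le> w g * (1 - (A g)\<^sup>2) / (1 - a)^3"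
      unfolding Y using mult_left_mono[OF X, of "w g"] wpos[OF g] by simp
  qed
  also have "\<dots> = Wt I w A / (1 - a)^3" unfolding Wt_def sum_divide_distrib ..
  finally show ?thesis .
qed

lemma Qf_nonpos: assumes "\<bar>D\<bar> \<le> 1" "\<bar>E\<bar> \<le> 1" "\<And>g. g \<in> I \<Longrightarrow> A g \<le> 0" shows "Qf I w A D E \<le> 0"
  unfolding Qf_def
proof (rule sum_nonpos)
  fix g assume g: "g \<in> I"
  have "0 < (1 + A g * D)\<^sup>2 * (1 + A g * E)" using u_pos[OF g assms(1)] u_pos[OF g assms(2)] by simp
  moreover have "A g * (1 - (A g)\<^sup>2) \<le> 0" using assms(3)[OF g] A_sq[OF g] by (simp add: mult_nonpos_nonneg)
  ultimately show "w g * (A g * (1 - (A g)\<^sup>2) / ((1 + A g * D)\<^sup>2 * (1 + A g * E))) \<le> 0"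
    using wpos[OF g] by (simp add: mult_nonneg_nonpos divide_nonpos_pos)
qed

lemma Qf_nonneg: assumes "\<bar>D\<bar> \<le> 1" "\<bar>E\<bar> \<le> 1" "\<And>g. g \<in> I \<Longrightarrow> A g \<ge> 0" shows "Qf I w A D E \<ge> 0"
  unfolding Qf_def
proof (rule sum_nonneg)
  fix g assume g: "g \<in> I"
  have "0 < (1 + A g * D)\<^sup>2 * (1 + A g * E)" using u_pos[OF g assms(1)] u_pos[OF g assms(2)] by simp
  moreover have "A g * (1 - (A g)\<^sup>2) \<ge> 0" using assms(3)[OF g] A_sq[OF g] by simp
  ultimately show "w g * (A g * (1 - (A g)\<^sup>2) / ((1 + A g * D)\<^sup>2 * (1 + A g * E))) \<ge> 0"
    using wpos[OF g] by simp
qed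

lemma Fn_diff: assumes "\<bar>D\<bar> \<le> 1" "\<bar>E\<bar> \<le> 1"
  shows "Fn I w A C D - Fn I w A C E = (D - E) * Sf I w A D E"
proof -
  have "Fn I w A C D - Fn I w A C E = (\<Sum>g\<in>I. w g * ((A g + D) / (1 + A g * D)) - w g * ((A g + E) / (1 + A g * E)))"
    by (simp add: Fn_def sum_subtractf)
  also have "\<dots> = (\<Sum>g\<in>I. (D - E) * (w g * ((1 - (A g)\<^sup>2) / ((1 + A g * D) * (1 + A g * E)))))"
  proof (rule sum.cong[OF refl])
    fix g assume g: "g \<in> I"
    have u: "1 + A g * D \<noteq> 0" "1 + A g * E \<noteq> 0" using u_pos[OF g assms(1)] u_pos[OF g assms(2)] by auto
    show "w g * ((A g + D) / (1 + A g * D)) - w g * ((A g + E) / (1 + A g * E)) =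
      (D - E) * (w g * ((1 - (A g)\<^sup>2) / ((1 + A g * D) * (1 + A g * E))))"
      using u by (simp add: field_simps power2_eq_square)
  qed
  also have "\<dots> = (D - E) * Sf I w A D E" by (simp add: Sf_def sum_distrib_left)
  finally show ?thesis .
qed

lemma Fn_newton: assumes "\<bar>D\<bar> \<le> 1" "\<bar>E\<bar> \<le> 1"
  shows "Fd I w A D * (D - E) - (D - E) * Sf I w A D E = - (D - E)\<^sup>2 * Qf I w A D E"
proof -
  have "Fd I w A D * (D - E) - (D - E) * Sf I w A D E = (\<Sum>g\<in>I. w g * ((1 - (A g)\<^sup>2) / (1 + A g * D)\<^sup>2) * (D - E) -
         (D - E) * (w g * ((1 - (A g)\<^sup>2) / ((1 + A g * D) * (1 + A g * E)))))"
    by (simp add: Fd_def Sf_def sum_subtractf sum_distrib_left sum_distrib_right)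
  also have "\<dots> = (\<Sum>g\<in>I. - ((D - E)\<^sup>2 * (w g * (A g * (1 - (A g)\<^sup>2) / ((1 + A g * D)\<^sup>2 * (1 + A g * E))))))"
  proof (rule sum.cong[OF refl])
    fix g assume g: "g \<in> I"
    have u: "1 + A g * D \<noteq> 0" "1 + A g * E \<noteq> 0" using u_pos[OF g assms(1)] u_pos[OF g assms(2)] by auto
    show "w g * ((1 - (A g)\<^sup>2) / (1 + A g * D)\<^sup>2) * (D - E) -
         (D - E) * (w g * ((1 - (A g)\<^sup>2) / ((1 + A g * D) * (1 + A g * E)))) =
         - ((D - E)\<^sup>2 * (w g * (A g * (1 - (A g)\<^sup>2) / ((1 + A g * D)\<^sup>2 * (1 + A g * E)))))"
      by (rule newton_term[OF u]) (simp add: algebra_simps)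
  qed
  also have "\<dots> = - (D - E)\<^sup>2 * Qf I w A D E" by (simp add: Qf_def sum_distrib_left sum_negf)
  finally show ?thesis .
qed

lemma Fn_deriv: assumes "\<bar>D\<bar> \<le> 1"
  shows "(Fn I w A C has_real_derivative Fd I w A D) (at D)"
proof -
  have nz: "\<And>g. g \<in> I \<Longrightarrow> 1 + A g * D \<noteq> 0" using u_pos[OF _ assms] by (metis less_irrefl)
  have "((\<lambda>D. (\<Sum>g\<in>I. w g * ((A g + D) / (1 + A g * D))) - C) has_real_derivative
     (\<Sum>g\<in>I. w g * ((1 - (A g)\<^sup>2) / (1 + A g * D)\<^sup>2)) - 0) (at D)"
  proof (intro DERIV_diff DERIV_sum DERIV_const DERIV_cmult)
    fix g assume g: "g \<in> I"
    have "((\<lambda>D. (A g + D) / (1 + A g * D)) has_real_derivative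
       ((0 + 1) * (1 + A g * D) - (A g + D) * (0 + A g * 1)) / ((1 + A g * D) * (1 + A g * D))) (at D)"
      using nz[OF g] by (intro DERIV_divide DERIV_add DERIV_cmult DERIV_const DERIV_ident) auto
    moreover have "((0 + 1) * (1 + A g * D) - (A g + D) * (0 + A g * 1)) / ((1 + A g * D) * (1 + A g * D))
        = (1 - (A g)\<^sup>2) / (1 + A g * D)\<^sup>2"
      by (simp add: power2_eq_square algebra_simps)
    ultimately show "((\<lambda>D. (A g + D) / (1 + A g * D)) has_real_derivative (1 - (A g)\<^sup>2) / (1 + A g * D)\<^sup>2) (at D)"
      by simp
  qed
  then show ?thesis unfolding Fd_def by (simp add: Fn_def[abs_def])
qed

lemma Fn_deriv_eq: "\<bar>D\<bar> \<le> 1 \<Longrightarrow> deriv (Fn I w A C) D = Fd I w A D"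
  using Fn_deriv by (rule DERIV_imp_deriv)

lemma Fn_ends: "Fn I w A C (-1) = -1 - C" "Fn I w A C 1 = 1 - C"
proof -
  have "Fn I w A C (-1) = (\<Sum>g\<in>I. w g * (-1)) - C" unfolding Fn_def
  proof (intro arg_cong2[where f="(-)"] sum.cong refl)
    fix g assume g: "g \<in> I"
    have "1 - A g \<noteq> 0" using Ab[OF g] a1 by auto
    then show "w g * ((A g + -1) / (1 + A g * -1)) = w g * -1" by (simp add: field_simps)
  qed
  then show "Fn I w A C (-1) = -1 - C" using wsum by (simp add: sum_negf)
  have "Fn I w A C 1 = (\<Sum>g\<in>I. w g * 1) - C" unfolding Fn_def
  proof (intro arg_cong2[where f="(-)"] sum.cong refl)
    fix g assume g: "g \<in> I"
    have "1 + A g \<noteq> 0" using Ab[OF g] a1 by auto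
    then show "w g * ((A g + 1) / (1 + A g * 1)) = w g * 1" by (simp add: field_simps)
  qed
  then show "Fn I w A C 1 = 1 - C" using wsum by simp
qed

lemma root_exists: assumes "\<bar>C\<bar> \<le> 1" shows "\<exists>E. -1 \<le> E \<and> E \<le> 1 \<and> Fn I w A C E = 0"
proof (rule IVT')
  show "Fn I w A C (-1) \<le> 0" "0 \<le> Fn I w A C 1" using Fn_ends assms by auto
  show "continuous_on {-1..1} (Fn I w A C)"
    by (rule continuous_at_imp_continuous_on) (auto intro!: DERIV_isCont Fn_deriv simp: abs_le_iff)
qed auto

lemma root_unique: assumes "\<bar>D\<bar> \<le> 1" "\<bar>E\<bar> \<le> 1" "Fn I w A C D = 0" "Fn I w A C E = 0"
  shows "D = E"
proof -
  have "(D - E) * Sf I w A D E = 0" using Fn_diff[OF assms(1,2)] assms(3,4) by simp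
  moreover have "Sf I w A D E > 0"
    using Sf_lo[OF assms(1,2)] W_pos a0 by (smt (verit) divide_pos_pos zero_less_power)
  ultimately show ?thesis by simp
qed

definition "cc = ((1 - a) / (1 + a))\<^sup>2"

lemma cc_bounds: "0 < cc" "cc \<le> 1"
proof -
  have "0 < (1 - a) / (1 + a)" "(1 - a) / (1 + a) \<le> 1" using a0 a1 by auto
  then show "0 < cc" "cc \<le> 1" unfolding cc_def by (auto simp: power_le_one)
qed

lemma step: assumes D: "\<bar>D\<bar> \<le> 1" and E: "\<bar>E\<bar> \<le> 1" and r: "Fn I w A C E = 0"
  shows "D - Fn I w A C D / Fd I w A D - E = - (D - E)\<^sup>2 * Qf I w A D E / Fd I w A D"
    and "D - Fn I w A C D / Fd I w A D - E = (D - E) * (1 - Sf I w A D E / Fd I w A D)"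
    and "cc \<le> Sf I w A D E / Fd I w A D"
    and "\<bar>Qf I w A D E\<bar> / Fd I w A D \<le> (1 + a)\<^sup>2 / (1 - a)^3"
proof -
  have Fd: "Fd I w A D > 0" using Fd_pos[OF D] .
  have FnD: "Fn I w A C D = (D - E) * Sf I w A D E" using Fn_diff[OF D E] r by simp
  show "D - Fn I w A C D / Fd I w A D - E = - (D - E)\<^sup>2 * Qf I w A D E / Fd I w A D"
  proof -
    have "D - Fn I w A C D / Fd I w A D - E = (Fd I w A D * (D - E) - (D - E) * Sf I w A D E) / Fd I w A D"
      using Fd unfolding FnD by (simp add: field_simps)
    then show ?thesis unfolding Fn_newton[OF D E] .
  qed
  show "D - Fn I w A C D / Fd I w A D - E = (D - E) * (1 - Sf I w A D E / Fd I w A D)"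
    using Fd unfolding FnD by (simp add: field_simps)
  have W: "Wt I w A > 0" by (rule W_pos)
  have pa: "0 < 1 - a" "0 < 1 + a" using a0 a1 by auto
  have "(Wt I w A / (1 + a)\<^sup>2) / (Wt I w A / (1 - a)\<^sup>2) \<le> Sf I w A D E / Fd I w A D"
  proof (rule frac_le)
    have "0 < Wt I w A / (1 + a)\<^sup>2" using W pa by simp
    then show "0 \<le> Sf I w A D E" using Sf_lo[OF D E] by linarith
  qed (use Sf_lo[OF D E] Fd_hi[OF D] Fd in auto)
  moreover have "(Wt I w A / (1 + a)\<^sup>2) / (Wt I w A / (1 - a)\<^sup>2) = cc"
    unfolding cc_def using W pa by (simp add: field_simps)
  ultimately show "cc \<le> Sf I w A D E / Fd I w A D" by simp
  have "\<bar>Qf I w A D E\<bar> / Fd I w A D \<le> (Wt I w A / (1 - a)^3) / (Wt I w A / (1 + a)\<^sup>2)"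
    using Qf_abs[OF D E] Fd_lo[OF D] Fd W pa by (intro frac_le) auto
  moreover have "(Wt I w A / (1 - a)^3) / (Wt I w A / (1 + a)\<^sup>2) = (1 + a)\<^sup>2 / (1 - a)^3"
    using W pa by (simp add: field_simps)
  ultimately show "\<bar>Qf I w A D E\<bar> / Fd I w A D \<le> (1 + a)\<^sup>2 / (1 - a)^3" by simp
qed

lemma step_dec: assumes Aneg: "\<And>g. g \<in> I \<Longrightarrow> A g \<le> 0" and E: "\<bar>E\<bar> \<le> 1"
    and r: "Fn I w A C E = 0" and D: "E \<le> D" "D \<le> 1"
  shows "E \<le> D - Fn I w A C D / Fd I w A D" and "D - Fn I w A C D / Fd I w A D - E \<le> (1 - cc) * (D - E)"
proof -
  have D1: "\<bar>D\<bar> \<le> 1" using D E by auto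
  have Fd: "Fd I w A D > 0" using Fd_pos[OF D1] .
  have Q: "Qf I w A D E \<le> 0" using Qf_nonpos[OF D1 E Aneg] by blast
  have "0 \<le> - (D - E)\<^sup>2 * Qf I w A D E / Fd I w A D"
  proof (rule divide_nonneg_pos)
    have "- (D - E)\<^sup>2 \<le> 0" by simp
    then show "0 \<le> - (D - E)\<^sup>2 * Qf I w A D E" using Q by (rule mult_nonpos_nonpos)
  qed (rule Fd)
  then show "E \<le> D - Fn I w A C D / Fd I w A D" using step(1)[OF D1 E r] by linarith
  have "(D - E) * (1 - Sf I w A D E / Fd I w A D) \<le> (D - E) * (1 - cc)"
    using step(3)[OF D1 E r] D by (intro mult_left_mono) auto
  then show "D - Fn I w A C D / Fd I w A D - E \<le> (1 - cc) * (D - E)"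
    using step(2)[OF D1 E r] by (simp add: mult.commute)
qed

lemma step_inc: assumes Apos: "\<And>g. g \<in> I \<Longrightarrow> A g \<ge> 0" and E: "\<bar>E\<bar> \<le> 1"
    and r: "Fn I w A C E = 0" and D: "-1 \<le> D" "D \<le> E"
  shows "D - Fn I w A C D / Fd I w A D \<le> E" and "E - (D - Fn I w A C D / Fd I w A D) \<le> (1 - cc) * (E - D)"
proof -
  have D1: "\<bar>D\<bar> \<le> 1" using D E by auto
  have Fd: "Fd I w A D > 0" using Fd_pos[OF D1] .
  have Q: "Qf I w A D E \<ge> 0" using Qf_nonneg[OF D1 E Apos] by blast
  have "- (D - E)\<^sup>2 * Qf I w A D E / Fd I w A D \<le> 0"
    using Q Fd by (simp add: divide_nonneg_pos)
  then show "D - Fn I w A C D / Fd I w A D \<le> E" using step(1)[OF D1 E r] by linarith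
  have "(E - D) * (1 - Sf I w A D E / Fd I w A D) \<le> (E - D) * (1 - cc)"
    using step(3)[OF D1 E r] D by (intro mult_left_mono) auto
  moreover have "E - (D - Fn I w A C D / Fd I w A D) = - ((D - E) * (1 - Sf I w A D E / Fd I w A D))"
    using step(2)[OF D1 E r] by linarith
  moreover have "- ((D - E) * (1 - Sf I w A D E / Fd I w A D)) = (E - D) * (1 - Sf I w A D E / Fd I w A D)"
    by (metis minus_diff_eq mult_minus_left)
  ultimately show "E - (D - Fn I w A C D / Fd I w A D) \<le> (1 - cc) * (E - D)"
    by (simp add: mult.commute)
qed

lemma step_quad: assumes D1: "\<bar>D\<bar> \<le> 1" and E: "\<bar>E\<bar> \<le> 1" and r: "Fn I w A C E = 0"
  shows "\<bar>D - Fn I w A C D / Fd I w A D - E\<bar> \<le> (1 + a)\<^sup>2 / (1 - a)^3 * (D - E)\<^sup>2"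
proof -
  have Fd: "Fd I w A D > 0" using Fd_pos[OF D1] .
  have "\<bar>D - Fn I w A C D / Fd I w A D - E\<bar> = (D - E)\<^sup>2 * (\<bar>Qf I w A D E\<bar> / Fd I w A D)"
    unfolding step(1)[OF D1 E r] using Fd by (simp add: abs_mult abs_divide)
  also have "\<dots> \<le> (D - E)\<^sup>2 * ((1 + a)\<^sup>2 / (1 - a)^3)"
    using step(4)[OF D1 E r] by (intro mult_left_mono) auto
  finally show ?thesis by (simp add: mult.commute)
qed

lemma seq_dec: assumes Aneg: "\<And>g. g \<in> I \<Longrightarrow> A g \<le> 0" and E: "\<bar>E\<bar> \<le> 1"
    and r: "Fn I w A C E = 0"
  shows "E \<le> newton_seq (Fn I w A C) 1 k \<and> newton_seq (Fn I w A C) 1 k \<le> 1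
     \<and> newton_seq (Fn I w A C) 1 k - E \<le> (1 - cc)^k * (1 - E)"
proof (induction k)
  case 0
  then show ?case using E by auto
next
  case (Suc k)
  define X where "X = newton_seq (Fn I w A C) 1 k"
  have X: "E \<le> X" "X \<le> 1" "X - E \<le> (1 - cc)^k * (1 - E)" using Suc X_def by auto
  have X1: "\<bar>X\<bar> \<le> 1" using X E by auto
  have eq: "newton_seq (Fn I w A C) 1 (Suc k) = X - Fn I w A C X / Fd I w A X"
    using Fn_deriv_eq[OF X1] X_def by simp
  note s = step_dec[OF Aneg E r X(1,2)]
  have "(1 - cc) * (X - E) \<le> (1 - cc) * ((1 - cc)^k * (1 - E))"
    using X(3) cc_bounds by (intro mult_left_mono) auto
  moreover have "(1 - cc) * (X - E) \<le> X - E"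
    using X cc_bounds by (intro mult_left_le_one_le) auto
  ultimately show ?case unfolding eq using s X
    by (simp add: mult.assoc)
qed

lemma seq_inc: assumes Apos: "\<And>g. g \<in> I \<Longrightarrow> A g \<ge> 0" and E: "\<bar>E\<bar> \<le> 1"
    and r: "Fn I w A C E = 0"
  shows "-1 \<le> newton_seq (Fn I w A C) (-1) k \<and> newton_seq (Fn I w A C) (-1) k \<le> E
     \<and> E - newton_seq (Fn I w A C) (-1) k \<le> (1 - cc)^k * (E + 1)"
proof (induction k)
  case 0
  then show ?case using E by auto
next
  case (Suc k)
  define X where "X = newton_seq (Fn I w A C) (-1) k"
  have X: "-1 \<le> X" "X \<le> E" "E - X \<le> (1 - cc)^k * (E + 1)" using Suc X_def by auto
  have X1: "\<bar>X\<bar> \<le> 1" using X E by auto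
  have eq: "newton_seq (Fn I w A C) (-1) (Suc k) = X - Fn I w A C X / Fd I w A X"
    using Fn_deriv_eq[OF X1] X_def by simp
  note s = step_inc[OF Apos E r X(1,2)]
  have "(1 - cc) * (E - X) \<le> (1 - cc) * ((1 - cc)^k * (E + 1))"
    using X(3) cc_bounds by (intro mult_left_mono) auto
  moreover have "(1 - cc) * (E - X) \<le> E - X"
    using X cc_bounds by (intro mult_left_le_one_le) auto
  ultimately show ?case unfolding eq using s X
    by (simp add: mult.assoc)
qed

lemma cc_rate: "(\<lambda>k. (1 - cc)^k * c) \<longlonglongrightarrow> 0"
  using cc_bounds by (intro tendsto_mult_left_zero LIMSEQ_power_zero) auto

lemma seq_dec_full: assumes Aneg: "\<And>g. g \<in> I \<Longrightarrow> A g \<le> 0" and E: "\<bar>E\<bar> \<le> 1"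
    and r: "Fn I w A C E = 0"
  shows "(\<forall>k. newton_seq (Fn I w A C) 1 k \<in> {-1..1}) \<and> decseq (newton_seq (Fn I w A C) 1)
     \<and> newton_seq (Fn I w A C) 1 \<longlonglongrightarrow> E"
proof (intro conjI allI)
  define X where "X = newton_seq (Fn I w A C) 1"
  note sd = seq_dec[OF Aneg E r, folded X_def]
  show "\<And>k. X k \<in> {-1..1}"
  proof -
    fix k show "X k \<in> {-1..1}" using sd[of k] E by (auto simp: abs_le_iff)
  qed
  show "decseq X"
  proof (rule decseq_SucI)
    fix k
    have X1: "\<bar>X k\<bar> \<le> 1" using sd[of k] E by auto
    have eq: "X (Suc k) = X k - Fn I w A C (X k) / Fd I w A (X k)"
      using Fn_deriv_eq[OF X1] X_def by simp
    have "(1 - cc) * (X k - E) \<le> X k - E"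
      using sd[of k] cc_bounds by (intro mult_left_le_one_le) auto
    then show "X (Suc k) \<le> X k" using step_dec(2)[OF Aneg E r, of "X k"] sd[of k] unfolding eq by linarith
  qed
  show "X \<longlonglongrightarrow> E"
  proof (rule LIM_zero_cancel, rule Lim_null_comparison)
    show "\<forall>\<^sub>F k in sequentially. norm (X k - E) \<le> (1 - cc)^k * (1 - E)"
    proof (rule always_eventually, rule allI)
      fix k
      have "0 \<le> (1 - cc)^k * (1 - E)" using cc_bounds E by (intro mult_nonneg_nonneg) auto
      then show "norm (X k - E) \<le> (1 - cc)^k * (1 - E)" using sd[of k] by (auto simp: abs_le_iff)
    qed
  qed (rule cc_rate)
qed

lemma seq_inc_full: assumes Apos: "\<And>g. g \<in> I \<Longrightarrow> A g \<ge> 0" and E: "\<bar>E\<bar> \<le> 1"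
    and r: "Fn I w A C E = 0"
  shows "(\<forall>k. newton_seq (Fn I w A C) (-1) k \<in> {-1..1}) \<and> incseq (newton_seq (Fn I w A C) (-1))
     \<and> newton_seq (Fn I w A C) (-1) \<longlonglongrightarrow> E"
proof (intro conjI allI)
  define X where "X = newton_seq (Fn I w A C) (-1)"
  note sd = seq_inc[OF Apos E r, folded X_def]
  show "\<And>k. X k \<in> {-1..1}"
  proof -
    fix k show "X k \<in> {-1..1}" using sd[of k] E by (auto simp: abs_le_iff)
  qed
  show "incseq X"
  proof (rule incseq_SucI)
    fix k
    have X1: "\<bar>X k\<bar> \<le> 1" using sd[of k] E by auto
    have eq: "X (Suc k) = X k - Fn I w A C (X k) / Fd I w A (X k)"
      using Fn_deriv_eq[OF X1] X_def by simp
    have "(1 - cc) * (E - X k) \<le> E - X k"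
      using sd[of k] cc_bounds by (intro mult_left_le_one_le) auto
    then show "X k \<le> X (Suc k)" using step_inc(2)[OF Apos E r, of "X k"] sd[of k] unfolding eq by linarith
  qed
  show "X \<longlonglongrightarrow> E"
  proof (rule LIM_zero_cancel, rule Lim_null_comparison)
    show "\<forall>\<^sub>F k in sequentially. norm (X k - E) \<le> (1 - cc)^k * (E + 1)"
    proof (rule always_eventually, rule allI)
      fix k
      have "0 \<le> (1 - cc)^k * (E + 1)" using cc_bounds E by (intro mult_nonneg_nonneg) auto
      then show "norm (X k - E) \<le> (1 - cc)^k * (E + 1)" using sd[of k] by (auto simp: abs_le_iff)
    qed
  qed (rule cc_rate)
qed

lemma seq_quad: assumes E: "\<bar>E\<bar> \<le> 1" and r: "Fn I w A C E = 0"
    and bd: "\<And>k. newton_seq (Fn I w A C) d0 k \<in> {-1..1}"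
  shows "\<exists>M. \<forall>k. \<bar>newton_seq (Fn I w A C) d0 (Suc k) - E\<bar> \<le> M * (newton_seq (Fn I w A C) d0 k - E)\<^sup>2"
proof (intro exI allI)
  fix k
  define X where "X = newton_seq (Fn I w A C) d0"
  have X1: "\<bar>X k\<bar> \<le> 1" using bd[of k] X_def by (auto simp: abs_le_iff)
  have eq: "X (Suc k) = X k - Fn I w A C (X k) / Fd I w A (X k)"
    using Fn_deriv_eq[OF X1] X_def by simp
  show "\<bar>X (Suc k) - E\<bar> \<le> (1 + a)\<^sup>2 / (1 - a)^3 * (X k - E)\<^sup>2"
    unfolding eq by (rule step_quad[OF X1 E r])
qed

end

theorem lemma1:
  fixes G :: nat and \<omega> P :: "nat \<Rightarrow> real" and \<beta> Hbar \<gamma> :: real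
  assumes G: "G \<ge> 1"
    and w_pos: "\<And>g. g \<in> {1..G} \<Longrightarrow> \<omega> g > 0"
    and w_sum: "(\<Sum>g=1..G. \<omega> g) = 1"
    and beta: "\<beta> > 0"
    and Hbar: "Hbar \<in> {0..1}"
    and cases: "\<gamma> < - Max ((\<lambda>g. \<beta> * P g) ` {1..G}) \<or> \<gamma> > - Min ((\<lambda>g. \<beta> * P g) ` {1..G})"
  defines "f \<equiv> thinc_f G \<omega> P \<beta> \<gamma> Hbar"
    and "D \<equiv> newton_seq (thinc_f G \<omega> P \<beta> \<gamma> Hbar) (if \<gamma> < - Max ((\<lambda>g. \<beta> * P g) ` {1..G}) then 1 else -1)"
  shows "\<exists>Ds. Ds \<in> {-1..1} \<and> f Ds = 0
            \<and> (\<forall>E \<in> {-1..1}. f E = 0 \<longrightarrow> E = Ds)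
            \<and> (\<forall>k. D k \<in> {-1..1})
            \<and> D \<longlonglongrightarrow> Ds
            \<and> (\<gamma> < - Max ((\<lambda>g. \<beta> * P g) ` {1..G}) \<longrightarrow> decseq D)
            \<and> (\<gamma> > - Min ((\<lambda>g. \<beta> * P g) ` {1..G}) \<longrightarrow> incseq D)
            \<and> (\<exists>M. \<forall>k. \<bar>D (Suc k) - Ds\<bar> \<le> M * (D k - Ds)\<^sup>2)"
proof -
  define I where "I = {1..G}"
  define A where "A = (\<lambda>g. tanh (\<beta> * P g + \<gamma>))"
  define C where "C = 2 * (Hbar - 1/2)"
  define a where "a = Max ((\<lambda>g. \<bar>A g\<bar>) ` I)"
  have fin: "finite I" and ne: "I \<noteq> {}" using G unfolding I_def by auto
  have wp: "\<And>g. g \<in> I \<Longrightarrow> \<omega> g > 0" using w_pos unfolding I_def by blast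
  have ws: "sum \<omega> I = 1" using w_sum unfolding I_def by simp
  have Ab: "\<And>g. g \<in> I \<Longrightarrow> \<bar>A g\<bar> \<le> a" unfolding a_def using fin by auto
  have a1: "a < 1"
  proof -
    have "a \<in> (\<lambda>g. \<bar>A g\<bar>) ` I" unfolding a_def using fin ne by (intro Max_in) auto
    then obtain g where "a = \<bar>A g\<bar>" by auto
    then show ?thesis unfolding A_def using tanh_real_bounds[of "\<beta> * P g + \<gamma>"] by auto
  qed
  have C1: "\<bar>C\<bar> \<le> 1" using Hbar unfolding C_def by auto
  have fEq: "thinc_f G \<omega> P \<beta> \<gamma> Hbar = Fn I \<omega> A C"
    by (rule ext) (simp add: thinc_f_def Fn_def Let_def I_def A_def C_def)
  note ctx = fin ne wp ws Ab a1
  note inst = root_exists[where I=I and w=\<omega> and A=A and a=a and C=C] root_unique[where I=I and w=\<omega> and A=A and a=a and C=C]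
    seq_dec_full[where I=I and w=\<omega> and A=A and a=a and C=C] seq_inc_full[where I=I and w=\<omega> and A=A and a=a and C=C]
    seq_quad[where I=I and w=\<omega> and A=A and a=a and C=C]
  obtain E where E: "-1 \<le> E" "E \<le> 1" "Fn I \<omega> A C E = 0"
    using inst(1)[OF ctx C1] by blast
  have E1: "\<bar>E\<bar> \<le> 1" using E by auto
  have uniq: "\<forall>E' \<in> {-1..1}. f E' = 0 \<longrightarrow> E' = E"
    using inst(2)[OF ctx _ E1 _ E(3)] unfolding f_def fEq by (auto simp: abs_le_iff)
  have fin2: "finite ((\<lambda>g. \<beta> * P g) ` I)" "(\<lambda>g. \<beta> * P g) ` I \<noteq> {}" using fin ne by auto
  have MinMax: "Min ((\<lambda>g. \<beta> * P g) ` I) \<le> Max ((\<lambda>g. \<beta> * P g) ` I)"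
    using fin2 by (meson Max_in Min_le)
  show ?thesis
  proof (cases "\<gamma> < - Max ((\<lambda>g. \<beta> * P g) ` {1..G})")
    case True
    have Aneg: "\<And>g. g \<in> I \<Longrightarrow> A g \<le> 0"
    proof -
      fix g assume g: "g \<in> I"
      have "\<beta> * P g \<le> Max ((\<lambda>g. \<beta> * P g) ` I)" by (rule Max_ge[OF fin2(1)]) (use g in auto)
      then show "A g \<le> 0" unfolding A_def using True I_def by auto
    qed
    have nc: "\<not> (\<gamma> > - Min ((\<lambda>g. \<beta> * P g) ` {1..G}))" using True MinMax I_def by auto
    have Deq: "D = newton_seq (Fn I \<omega> A C) 1" unfolding D_def fEq using True by simp
    note sf = inst(3)[OF ctx Aneg E1 E(3), folded Deq]
    have bd: "\<And>k. newton_seq (Fn I \<omega> A C) 1 k \<in> {-1..1}" using sf unfolding Deq by blast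
    note q = inst(5)[OF ctx E1 E(3) bd, folded Deq]
    have fE: "f E = 0" unfolding f_def fEq using E(3) .
    show ?thesis
    proof (rule exI[of _ E], intro conjI impI)
      show "E \<in> {-1..1}" using E by simp
      show "f E = 0" by (rule fE)
      show "\<forall>E' \<in> {-1..1}. f E' = 0 \<longrightarrow> E' = E" by (rule uniq)
      show "\<forall>k. D k \<in> {-1..1}" using sf by blast
      show "D \<longlonglongrightarrow> E" using sf by blast
      show "incseq D" if "\<gamma> > - Min ((\<lambda>g. \<beta> * P g) ` {1..G})" using nc that by blast
      show "decseq D" if "\<gamma> < - Max ((\<lambda>g. \<beta> * P g) ` {1..G})" using sf by blast
      show "\<exists>M. \<forall>k. \<bar>D (Suc k) - E\<bar> \<le> M * (D k - E)\<^sup>2" using q by (simp add: Deq)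
    qed
  next
    case False
    then have T: "\<gamma> > - Min ((\<lambda>g. \<beta> * P g) ` {1..G})" using cases by blast
    have Apos: "\<And>g. g \<in> I \<Longrightarrow> A g \<ge> 0"
    proof -
      fix g assume g: "g \<in> I"
      have "Min ((\<lambda>g. \<beta> * P g) ` I) \<le> \<beta> * P g" by (rule Min_le[OF fin2(1)]) (use g in auto)
      then show "A g \<ge> 0" unfolding A_def using T I_def by auto
    qed
    have Deq: "D = newton_seq (Fn I \<omega> A C) (-1)" unfolding D_def fEq using False by simp
    note sf = inst(4)[OF ctx Apos E1 E(3), folded Deq]
    have bd: "\<And>k. newton_seq (Fn I \<omega> A C) (-1) k \<in> {-1..1}" using sf unfolding Deq by blast
    note q = inst(5)[OF ctx E1 E(3) bd, folded Deq]
    have fE: "f E = 0" unfolding f_def fEq using E(3) .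
    show ?thesis
    proof (rule exI[of _ E], intro conjI impI)
      show "E \<in> {-1..1}" using E by simp
      show "f E = 0" by (rule fE)
      show "\<forall>E' \<in> {-1..1}. f E' = 0 \<longrightarrow> E' = E" by (rule uniq)
      show "\<forall>k. D k \<in> {-1..1}" using sf by blast
      show "D \<longlonglongrightarrow> E" using sf by blast
      show "decseq D" if "\<gamma> < - Max ((\<lambda>g. \<beta> * P g) ` {1..G})" using False that by blast
      show "incseq D" if "\<gamma> > - Min ((\<lambda>g. \<beta> * P g) ` {1..G})" using sf by blast
      show "\<exists>M. \<forall>k. \<bar>D (Suc k) - E\<bar> \<le> M * (D k - E)\<^sup>2" using q by (simp add: Deq)
    qed
  qed
qed

end
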